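(* Let $X$ be a subshift and $n\ge2$. If $a_1\dots a_n$ is a significant block of $X$, then $a_1\dots a_{n-1}$ is also a significant block of $X$.
   Context: Let $\mathcal A$ be a finite alphabet and $\sigma$ the shift, $(\sigma x)_i=x_{i+1}$. For a one-sided subshift $X^+\subseteq\mathcal A^{\mathbb N}$ (nonempty, closed, $\sigma$-invariant), the natural extension is $\tilde X=\{x\in\mathcal A^{\mathbb Z}: x_px_{p+1}\dots\in X^+\ \forall p\in\mathbb Z\}$; for a two-sided subshift $X$, $X^+$ is the set of right rays of its points and $\tilde X=X$. For a block $a_{-n}\dots a_0$ occurring in $\tilde X$, $\mathrm{fol}(a_{-n}\dots a_0)=\{b_0b_1\dots\in X^+:\exists b\in\tilde X,\ b_{-n}\dots b_0=a_{-n}\dots a_0\}$. A block $a_{-n}\dots a_0$ occurring in $\tilde X$ with $n\ge1$ is a significant block of $X$ if $\mathrm{fol}(a_{-n}\dots a_0)\subsetneq\mathrm{fol}(a_{-n+1}\dots a_0)$; single symbols occurring in $\tilde X$ are also counted as significant. *)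

theory Defs
  imports Main
begin

text \<open>Closedness in the product topology of the discrete alphabet
  is written out via central/initial cylinders.\<close>

definition shift1 :: "(nat \<Rightarrow> 'a) \<Rightarrow> (nat \<Rightarrow> 'a)" where
  "shift1 x = (\<lambda>i. x (Suc i))"

definition shift2 :: "(int \<Rightarrow> 'a) \<Rightarrow> (int \<Rightarrow> 'a)" where
  "shift2 x = (\<lambda>i. x (i + 1))"

definition closed1 :: "(nat \<Rightarrow> 'a) set \<Rightarrow> bool" where
  "closed1 X \<longleftrightarrow> (\<forall>x. (\<forall>n. \<exists>y\<in>X. \<forall>i<n. y i = x i) \<longrightarrow> x \<in> X)"

definition closed2 :: "(int \<Rightarrow> 'a) set \<Rightarrow> bool" where
  "closed2 X \<longleftrightarrow> (\<forall>x. (\<forall>n::nat. \<exists>y\<in>X. \<forall>i. \<bar>i\<bar> \<le> int n \<longrightarrow> y i = x i) \<longrightarrow> x \<in> X)"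

definition one_sided_subshift :: "(nat \<Rightarrow> 'a::finite) set \<Rightarrow> bool" where
  "one_sided_subshift X \<longleftrightarrow> X \<noteq> {} \<and> closed1 X \<and> shift1 ` X \<subseteq> X"

definition two_sided_subshift :: "(int \<Rightarrow> 'a::finite) set \<Rightarrow> bool" where
  "two_sided_subshift X \<longleftrightarrow> X \<noteq> {} \<and> closed2 X \<and> shift2 ` X = X"

definition ray :: "(int \<Rightarrow> 'a) \<Rightarrow> int \<Rightarrow> (nat \<Rightarrow> 'a)" where
  "ray x p = (\<lambda>k. x (p + int k))"

definition nat_ext :: "(nat \<Rightarrow> 'a) set \<Rightarrow> (int \<Rightarrow> 'a) set" where
  "nat_ext Xp = {x. \<forall>p. ray x p \<in> Xp}"

definition right_rays :: "(int \<Rightarrow> 'a) set \<Rightarrow> (nat \<Rightarrow> 'a) set" where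
  "right_rays X = {ray x p | x p. x \<in> X}"

definition subshift_pair :: "(nat \<Rightarrow> 'a::finite) set \<Rightarrow> (int \<Rightarrow> 'a) set \<Rightarrow> bool" where
  "subshift_pair Xp Xt \<longleftrightarrow>
     (one_sided_subshift Xp \<and> Xt = nat_ext Xp) \<or>
     (two_sided_subshift Xt \<and> Xp = right_rays Xt)"

text \<open>A block is a list w = [a_{-n}, ..., a_0] (length n+1).\<close>
definition occurs :: "(int \<Rightarrow> 'a) set \<Rightarrow> 'a list \<Rightarrow> bool" where
  "occurs Xt w \<longleftrightarrow> (\<exists>x\<in>Xt. \<exists>p. \<forall>i<length w. x (p + int i) = w ! i)"

definition fol :: "(nat \<Rightarrow> 'a) set \<Rightarrow> (int \<Rightarrow> 'a) set \<Rightarrow> 'a list \<Rightarrow> (nat \<Rightarrow> 'a) set" where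
  "fol Xp Xt w = {y \<in> Xp. \<exists>b\<in>Xt.
      (\<forall>i<length w. b (int i - (int (length w) - 1)) = w ! i) \<and> y = ray b 0}"

definition significant :: "(nat \<Rightarrow> 'a) set \<Rightarrow> (int \<Rightarrow> 'a) set \<Rightarrow> 'a list \<Rightarrow> bool" where
  "significant Xp Xt w \<longleftrightarrow> occurs Xt w \<and>
     (length w = 1 \<or> (length w \<ge> 2 \<and> fol Xp Xt w \<subset> fol Xp Xt (tl w)))"

end

theory Submission
  imports Defs
begin

lemma shift2_pos: "shift2 ` X = X \<Longrightarrow> x \<in> X \<Longrightarrow> (\<lambda>i. x (i + int n)) \<in> X"
proof (induction n arbitrary: x)
  case 0 then show ?case by simp
next
  case (Suc n)
  have "shift2 x \<in> X" using Suc.prems by blast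
  from Suc.IH[OF Suc.prems(1) this] show ?case
    by (simp add: shift2_def ac_simps)
qed

lemma shift2_neg: "shift2 ` X = X \<Longrightarrow> x \<in> X \<Longrightarrow> (\<lambda>i. x (i - int n)) \<in> X"
proof (induction n arbitrary: x)
  case 0 then show ?case by simp
next
  case (Suc n)
  from Suc.prems obtain z where z: "z \<in> X" "x = shift2 z" by blast
  have "(\<lambda>i. z (i - int n)) \<in> X" using Suc.IH[OF Suc.prems(1) z(1)] .
  moreover have "(\<lambda>i. x (i - int (Suc n))) = (\<lambda>i. z (i - int n))"
    using z(2) by (simp add: shift2_def algebra_simps)
  ultimately show ?case by simp
qed

lemma shift_closed:
  assumes "subshift_pair Xp Xt" "x \<in> Xt"
  shows "(\<lambda>i. x (i + k)) \<in> Xt"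
  using assms(1) unfolding subshift_pair_def
proof (elim disjE)
  assume h: "one_sided_subshift Xp \<and> Xt = nat_ext Xp"
  then show ?thesis using assms(2)
  proof -
    have "\<forall>p. ray x p \<in> Xp" using assms(2) h by (simp add: nat_ext_def)
    moreover have "\<And>p. ray (\<lambda>i. x (i + k)) p = ray x (p + k)" unfolding ray_def
      by (rule ext) (simp add: algebra_simps)
    ultimately have "\<forall>p. ray (\<lambda>i. x (i + k)) p \<in> Xp" by metis
    then show ?thesis using h unfolding nat_ext_def by blast
  qed
next
  assume h: "two_sided_subshift Xt \<and> Xp = right_rays Xt"
  then have s: "shift2 ` Xt = Xt" by (simp add: two_sided_subshift_def)
  show ?thesis
  proof (cases "k \<ge> 0")
    case True
    then obtain n where "k = int n" by (intro that[of "nat k"]) simp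
    then show ?thesis using shift2_pos[OF s assms(2)] by simp
  next
    case False
    then obtain n where "k = - int n" by (intro that[of "nat (- k)"]) simp
    then show ?thesis using shift2_neg[OF s assms(2), of n] by simp
  qed
qed

lemma ray_in:
  assumes "subshift_pair Xp Xt" "x \<in> Xt"
  shows "ray x p \<in> Xp"
  using assms unfolding subshift_pair_def nat_ext_def right_rays_def by auto

lemma fol_memI:
  assumes "y \<in> Xp" "b \<in> Xt" "\<And>i. i < length v \<Longrightarrow> b (int i - (int (length v) - 1)) = v ! i"
    "y = ray b 0"
  shows "y \<in> fol Xp Xt v"
  using assms unfolding fol_def by blast

theorem lemma3p9:
  fixes Xp :: "(nat \<Rightarrow> 'a::finite) set" and Xt :: "(int \<Rightarrow> 'a) set" and w :: "'a list"
  assumes "subshift_pair Xp Xt"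
    and "length w \<ge> 2"
    and "significant Xp Xt w"
  shows "significant Xp Xt (butlast w)"
proof -
  define m where "m = length w"
  have m2: "m \<ge> 2" using assms(2) m_def by simp
  have strict: "fol Xp Xt w \<subset> fol Xp Xt (tl w)" using assms(2,3) by (simp add: significant_def)
  have occ: "occurs Xt (butlast w)"
  proof -
    from assms(3) obtain x p where "x \<in> Xt" "\<forall>i<length w. x (p + int i) = w ! i"
      by (auto simp: significant_def occurs_def)
    then show ?thesis unfolding occurs_def
      by (intro bexI[of _ x] exI[of _ p]) (auto simp: nth_butlast)
  qed
  show ?thesis
  proof (cases "m = 2")
    case True
    then show ?thesis using occ m_def by (simp add: significant_def)
  next
    case False
    hence m3: "m \<ge> 3" using m2 by simp
    let ?bw = "butlast w"
    have lbw: "length ?bw = m - 1" using m_def by simp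
    have sub: "fol Xp Xt ?bw \<subseteq> fol Xp Xt (tl ?bw)"
    proof
      fix y assume "y \<in> fol Xp Xt ?bw"
      then obtain b where b: "y \<in> Xp" "b \<in> Xt"
        "\<forall>i<m - 1. b (int i - (int (m - 1) - 1)) = ?bw ! i" "y = ray b 0"
        unfolding fol_def using lbw m_def by auto
      have "\<forall>i<m - 2. b (int i - (int (m - 2) - 1)) = tl ?bw ! i"
      proof (intro allI impI)
        fix i assume i: "i < m - 2"
        have "Suc i < m - 1" using i by simp
        hence "b (int (Suc i) - (int (m - 1) - 1)) = ?bw ! Suc i" by (rule b(3)[rule_format])
        moreover have "int (Suc i) - (int (m - 1) - 1) = int i - (int (m - 2) - 1)" using m3 by simp
        moreover have "?bw ! Suc i = tl ?bw ! i" using i lbw by (simp add: nth_tl)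
        ultimately show "b (int i - (int (m - 2) - 1)) = tl ?bw ! i" by metis
      qed
      moreover have "length (tl ?bw) = m - 2" using lbw by simp
      ultimately show "y \<in> fol Xp Xt (tl ?bw)" using b by (intro fol_memI[of y Xp b]) auto
    qed
    have "fol Xp Xt ?bw \<subset> fol Xp Xt (tl ?bw)"
    proof (rule ccontr)
      assume "\<not> ?thesis"
      with sub have eq: "fol Xp Xt (tl ?bw) \<subseteq> fol Xp Xt ?bw" by blast
      have "fol Xp Xt (tl w) \<subseteq> fol Xp Xt w"
      proof
        fix y assume "y \<in> fol Xp Xt (tl w)"
        then obtain b where b: "y \<in> Xp" "b \<in> Xt"
          "\<forall>i<m - 1. b (int i - (int (m - 1) - 1)) = tl w ! i" "y = ray b 0"
          unfolding fol_def using m_def by auto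
        define c where "c = (\<lambda>j. b (j + (-1)))"
        have cX: "c \<in> Xt" unfolding c_def using shift_closed[OF assms(1) b(2)] .
        have "\<forall>i<m - 2. c (int i - (int (m - 2) - 1)) = tl ?bw ! i"
        proof (intro allI impI)
          fix i assume i: "i < m - 2"
          have "c (int i - (int (m - 2) - 1)) = b (int i - (int (m - 1) - 1))"
            unfolding c_def using m3 by (simp add: algebra_simps)
          also have "\<dots> = tl w ! i" using b(3) i by auto
          also have "\<dots> = w ! Suc i" using i m_def by (simp add: nth_tl)
          also have "\<dots> = tl ?bw ! i" using i m_def by (simp add: nth_tl nth_butlast)
          finally show "c (int i - (int (m - 2) - 1)) = tl ?bw ! i" .
        qed
        moreover have "length (tl ?bw) = m - 2" using lbw by simp
        ultimately have "ray c 0 \<in> fol Xp Xt (tl ?bw)"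
          using cX ray_in[OF assms(1) cX] by (intro fol_memI[of "ray c 0" Xp c]) auto
        with eq have "ray c 0 \<in> fol Xp Xt ?bw" by blast
        then obtain d where d: "d \<in> Xt"
          "\<forall>i<m - 1. d (int i - (int (m - 1) - 1)) = ?bw ! i" "ray c 0 = ray d 0"
          unfolding fol_def using lbw m_def by auto
        have dc: "\<And>k. d (int k) = c (int k)" using d(3) unfolding ray_def by (metis add_0)
        define e where "e = (\<lambda>j. d (j + 1))"
        have eX: "e \<in> Xt" unfolding e_def using shift_closed[OF assms(1) d(1)] .
        have ray_eq: "ray e 0 = ray b 0"
        proof
          fix k
          have "d (int (Suc k)) = c (int (Suc k))" by (rule dc)
          then show "ray e 0 k = ray b 0 k" unfolding ray_def e_def c_def by (simp add: add.commute)
        qed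
        have blk: "\<forall>i<m. e (int i - (int m - 1)) = w ! i"
        proof (intro allI impI)
          fix i assume i: "i < m"
          show "e (int i - (int m - 1)) = w ! i"
          proof (cases "i < m - 1")
            case True
            have "e (int i - (int m - 1)) = d (int i - (int (m - 1) - 1))"
              unfolding e_def using m3 by (simp add: algebra_simps)
            also have "\<dots> = ?bw ! i" using d(2) True by auto
            also have "\<dots> = w ! i" using True m_def by (simp add: nth_butlast)
            finally show ?thesis .
          next
            case False
            hence ii: "i = m - 1" using i by simp
            have "e (int i - (int m - 1)) = d 1" unfolding e_def using ii m3 by simp
            also have "\<dots> = c 1" using dc[of 1] by simp
            also have "\<dots> = b 0" unfolding c_def by simp
            also have "\<dots> = b (int (m - 2) - (int (m - 1) - 1))" using m3 by simp
            also have "\<dots> = tl w ! (m - 2)" using m3 by (intro b(3)[rule_format]) simp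
            also have "\<dots> = w ! (m - 1)" using m3 m_def by (simp add: nth_tl Suc_diff_Suc numeral_2_eq_2)
            finally show ?thesis using ii by simp
          qed
        qed
        show "y \<in> fol Xp Xt w" using b(1,4) eX ray_eq blk m_def by (intro fol_memI[of y Xp e]) auto
      qed
      with strict show False by blast
    qed
    then show ?thesis using occ lbw m3 by (auto simp add: significant_def)
  qed
qed

end
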